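(* Assume the following setting. (i) $X$ is a Banach space, and for each $0<h<1$, $X_h\subseteq X$ is a closed subspace. (ii) $\pi_h:X\to X_h$ is bounded and linear, with $\Vert\pi_h\Vert_{L(X)}$ bounded independently of $h$ and $\pi_hx=x$ for $x\in X_h$. (iii) $A:D(A)\subseteq X\to X$ is a closed, densely defined linear operator, and there are $\lambda\ge0$, $\delta\in(0,\pi/2)$, $M\ge1$ with $\sigma(\lambda+A)\subseteq\Sigma_\delta$ and $\Vert(z-\lambda-A)^{-1}x\Vert_X\le\frac M{|z|}\Vert x\Vert_X$ for all $x\in X$, $z\notin\Sigma_\delta$. (iv) $A_h:X_h\to X_h$ are linear operators with $\sigma(\lambda+A_h)\subseteq\Sigma_\delta$ and $\Vert(z-\lambda-A_h)^{-1}x\Vert_X\le\frac M{|z|}\Vert x\Vert_X$ for all $x\in X_h$, $z\notin\Sigma_\delta$, for all $h$. (v) For some $r>0$, $\Vert((\lambda+A)^{-1}-(\lambda+A_h)^{-1}\pi_h)x\Vert_X\le Ch^r\Vert x\Vert_X$ for all $x\in X$. (vi) $\Vert A_hx\Vert_X\le Ch^{-r}\Vert x\Vert_X$ for all $x\in X_h$. Then there is $C>0$, independent of $h$, such that $$\Vert(\lambda+A_h)\pi_hx\Vert_X\le C\Vert(\lambda+A)x\Vert_X\quad\text{for all } x\in D(A).$$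
   Context: $\Sigma_\delta:=\{z\in\mathbb{C}\setminus\{0\}:|\arg z|<\delta\}$. *)

theory Defs
  imports "HOL-Analysis.Analysis"
begin

text \<open>A complex Banach space is modelled as a real Banach space type together with a
  complex scalar multiplication sc extending the real one and compatible with the norm.\<close>
definition complex_banach_scaling :: "(complex \<Rightarrow> 'a::banach \<Rightarrow> 'a) \<Rightarrow> bool" where
  "complex_banach_scaling sc \<longleftrightarrow>
     Vector_Spaces.vector_space sc \<and>
     (\<forall>r x. sc (complex_of_real r) x = r *\<^sub>R x) \<and>
     (\<forall>c x. norm (sc c x) = cmod c * norm x)"

definition csubspace :: "(complex \<Rightarrow> 'a::banach \<Rightarrow> 'a) \<Rightarrow> 'a set \<Rightarrow> bool" where
  "csubspace sc S \<longleftrightarrow> 0 \<in> S \<and> (\<forall>x\<in>S. \<forall>y\<in>S. x + y \<in> S) \<and> (\<forall>c. \<forall>x\<in>S. sc c x \<in> S)"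

definition clinear_on :: "(complex \<Rightarrow> 'a::banach \<Rightarrow> 'a) \<Rightarrow> 'a set \<Rightarrow> ('a \<Rightarrow> 'a) \<Rightarrow> bool" where
  "clinear_on sc D T \<longleftrightarrow> csubspace sc D \<and>
     (\<forall>x\<in>D. \<forall>y\<in>D. T (x + y) = T x + T y) \<and> (\<forall>c. \<forall>x\<in>D. T (sc c x) = sc c (T x))"

definition closed_operator :: "'a set \<Rightarrow> ('a::banach \<Rightarrow> 'a) \<Rightarrow> bool" where
  "closed_operator D T \<longleftrightarrow> closed {(x, T x) | x. x \<in> D}"

definition op_inv :: "'a set \<Rightarrow> ('a \<Rightarrow> 'a) \<Rightarrow> 'a \<Rightarrow> 'a" where
  "op_inv D T = the_inv_into D T"

definition resolvent_set :: "(complex \<Rightarrow> 'a::banach \<Rightarrow> 'a) \<Rightarrow> 'a set \<Rightarrow> 'a set \<Rightarrow> ('a \<Rightarrow> 'a) \<Rightarrow> complex set" where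
  "resolvent_set sc Y D T = {z. bij_betw (\<lambda>x. sc z x - T x) D Y \<and>
      (\<exists>K. \<forall>y\<in>Y. norm (op_inv D (\<lambda>x. sc z x - T x) y) \<le> K * norm y)}"

definition op_spectrum :: "(complex \<Rightarrow> 'a::banach \<Rightarrow> 'a) \<Rightarrow> 'a set \<Rightarrow> 'a set \<Rightarrow> ('a \<Rightarrow> 'a) \<Rightarrow> complex set" where
  "op_spectrum sc Y D T = - resolvent_set sc Y D T"

definition resolvent :: "(complex \<Rightarrow> 'a::banach \<Rightarrow> 'a) \<Rightarrow> 'a set \<Rightarrow> ('a \<Rightarrow> 'a) \<Rightarrow> complex \<Rightarrow> 'a \<Rightarrow> 'a" where
  "resolvent sc D T z = op_inv D (\<lambda>x. sc z x - T x)"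

definition sector :: "real \<Rightarrow> complex set" where
  "sector \<delta> = {z. z \<noteq> 0 \<and> \<bar>Arg z\<bar> < \<delta>}"

end

theory Submission
  imports Defs
begin

theorem lemma2p10:
  fixes sc :: "complex \<Rightarrow> 'a::banach \<Rightarrow> 'a"
    and Xh :: "real \<Rightarrow> 'a set"
    and \<pi> :: "real \<Rightarrow> 'a \<Rightarrow> 'a"
    and D :: "'a set"
    and A :: "'a \<Rightarrow> 'a"
    and Ah :: "real \<Rightarrow> 'a \<Rightarrow> 'a"
    and lam \<delta> M C r :: real
  assumes X: "complex_banach_scaling sc"
    and Xh: "\<And>h. 0 < h \<Longrightarrow> h < 1 \<Longrightarrow> csubspace sc (Xh h) \<and> closed (Xh h)"
    and pi_lin: "\<And>h. 0 < h \<Longrightarrow> h < 1 \<Longrightarrow>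
        clinear_on sc UNIV (\<pi> h) \<and> (\<exists>K. \<forall>x. norm (\<pi> h x) \<le> K * norm x) \<and> (\<forall>x. \<pi> h x \<in> Xh h)"
    and pi_unif: "\<exists>K. \<forall>h. 0 < h \<and> h < 1 \<longrightarrow> (\<forall>x. norm (\<pi> h x) \<le> K * norm x)"
    and pi_proj: "\<And>h x. 0 < h \<Longrightarrow> h < 1 \<Longrightarrow> x \<in> Xh h \<Longrightarrow> \<pi> h x = x"
    and A_lin: "clinear_on sc D A"
    and A_closed: "closed_operator D A"
    and A_dense: "closure D = UNIV"
    and lam: "lam \<ge> 0"
    and delta: "0 < \<delta>" "\<delta> < pi / 2"
    and M: "M \<ge> 1"
    and A_spec: "op_spectrum sc UNIV D (\<lambda>x. lam *\<^sub>R x + A x) \<subseteq> sector \<delta>"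
    and A_res: "\<And>z x. z \<notin> sector \<delta> \<Longrightarrow> z \<noteq> 0 \<Longrightarrow>
        norm (resolvent sc D (\<lambda>x. lam *\<^sub>R x + A x) z x) \<le> M / cmod z * norm x"
    and Ah_lin: "\<And>h. 0 < h \<Longrightarrow> h < 1 \<Longrightarrow> clinear_on sc (Xh h) (Ah h) \<and> (\<forall>x\<in>Xh h. Ah h x \<in> Xh h)"
    and Ah_spec: "\<And>h. 0 < h \<Longrightarrow> h < 1 \<Longrightarrow>
        op_spectrum sc (Xh h) (Xh h) (\<lambda>x. lam *\<^sub>R x + Ah h x) \<subseteq> sector \<delta>"
    and Ah_res: "\<And>h z x. 0 < h \<Longrightarrow> h < 1 \<Longrightarrow> z \<notin> sector \<delta> \<Longrightarrow> z \<noteq> 0 \<Longrightarrow> x \<in> Xh h \<Longrightarrow>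
        norm (resolvent sc (Xh h) (\<lambda>x. lam *\<^sub>R x + Ah h x) z x) \<le> M / cmod z * norm x"
    and r: "r > 0"
    and approx: "\<And>h x. 0 < h \<Longrightarrow> h < 1 \<Longrightarrow>
        norm (op_inv D (\<lambda>x. lam *\<^sub>R x + A x) x
              - op_inv (Xh h) (\<lambda>x. lam *\<^sub>R x + Ah h x) (\<pi> h x)) \<le> C * h powr r * norm x"
    and inverse_est: "\<And>h x. 0 < h \<Longrightarrow> h < 1 \<Longrightarrow> x \<in> Xh h \<Longrightarrow>
        norm (Ah h x) \<le> C * h powr (- r) * norm x"
  shows "\<exists>C'>0. \<forall>h. 0 < h \<and> h < 1 \<longrightarrow>
           (\<forall>x\<in>D. norm (lam *\<^sub>R \<pi> h x + Ah h (\<pi> h x)) \<le> C' * norm (lam *\<^sub>R x + A x))"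
proof -
  have sc0: "sc 0 x = 0" for x
    using X unfolding complex_banach_scaling_def by (metis of_real_0 scaleR_zero_left)
  have scm1: "sc (-1) x = - x" for x
    using X unfolding complex_banach_scaling_def by (metis of_real_1 of_real_minus scaleR_minus1_left)
  have z0: "0 \<notin> sector \<delta>" unfolding sector_def by auto
  have "0 \<in> resolvent_set sc UNIV D (\<lambda>x. lam *\<^sub>R x + A x)"
    using A_spec z0 unfolding op_spectrum_def by auto
  then have "bij_betw (\<lambda>x. - (lam *\<^sub>R x + A x)) D UNIV"
    unfolding resolvent_set_def by (simp add: sc0)
  then have injB: "inj_on (\<lambda>x. lam *\<^sub>R x + A x) D"
    unfolding bij_betw_def inj_on_def by (metis minus_diff_eq minus_add_distrib diff_conv_add_uminus)
  have Binv: "op_inv D (\<lambda>x. lam *\<^sub>R x + A x) (lam *\<^sub>R x + A x) = x" if "x \<in> D" for x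
    unfolding op_inv_def using the_inv_into_f_f[OF injB that] by simp
  obtain K where K: "\<And>h x. 0 < h \<Longrightarrow> h < 1 \<Longrightarrow> norm (\<pi> h x) \<le> K * norm x"
    using pi_unif by blast
  define C' where "C' = lam * \<bar>K\<bar> * \<bar>C\<bar> + \<bar>K\<bar> * C^2 + \<bar>K\<bar> + 1"
  have C'pos: "C' > 0" unfolding C'_def using lam by (simp add: add_nonneg_pos)
  show ?thesis
  proof (intro exI[of _ C'] conjI allI impI ballI C'pos)
    fix h :: real and x assume h: "0 < h \<and> h < 1" and xD: "x \<in> D"
    from h have h0: "0 < h" and h1: "h < 1" by auto
    note XhS = Xh[OF h0 h1]
    note piL = pi_lin[OF h0 h1]
    note AhL = Ah_lin[OF h0 h1]
    define Bh where "Bh = (\<lambda>x. lam *\<^sub>R x + Ah h x)"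
    define y where "y = lam *\<^sub>R x + A x"
    have XhM: "u \<in> Xh h \<Longrightarrow> - u \<in> Xh h" for u
      using XhS scm1 unfolding csubspace_def by metis
    have XhA: "u \<in> Xh h \<Longrightarrow> v \<in> Xh h \<Longrightarrow> u + v \<in> Xh h" for u v
      using XhS unfolding csubspace_def by blast
    have XhD: "u \<in> Xh h \<Longrightarrow> v \<in> Xh h \<Longrightarrow> u - v \<in> Xh h" for u v
      using XhA[of u "- v"] XhM[of v] by simp
    have AhA: "u \<in> Xh h \<Longrightarrow> v \<in> Xh h \<Longrightarrow> Ah h (u + v) = Ah h u + Ah h v" for u v
      using AhL unfolding clinear_on_def by blast
    have AhD: "Ah h (u - v) = Ah h u - Ah h v" if "u \<in> Xh h" "v \<in> Xh h" for u v
      using AhA[OF XhD[OF that] that(2)] by (simp add: algebra_simps)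
    have piA: "\<pi> h (u + v) = \<pi> h u + \<pi> h v" for u v
      using piL unfolding clinear_on_def by blast
    have piD: "\<pi> h (u - v) = \<pi> h u - \<pi> h v" for u v
      using piA[of "u - v" v] by (simp add: algebra_simps)
    have "0 \<in> resolvent_set sc (Xh h) (Xh h) Bh"
      using Ah_spec[OF h0 h1] z0 unfolding op_spectrum_def Bh_def by auto
    then have bm: "bij_betw (\<lambda>x. - Bh x) (Xh h) (Xh h)"
      unfolding resolvent_set_def by (simp add: sc0)
    have injBh: "inj_on Bh (Xh h)"
      using bm unfolding bij_betw_def inj_on_def by (metis minus_diff_eq minus_add_distrib diff_conv_add_uminus)
    have imBh: "Bh ` Xh h = Xh h"
    proof -
      have "(\<lambda>x. - Bh x) ` Xh h = Xh h" using bm by (simp add: bij_betw_def)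
      then have "uminus ` (Bh ` Xh h) = Xh h" by (simp add: image_image)
      then have "uminus ` (uminus ` (Bh ` Xh h)) = uminus ` Xh h" by simp
      moreover have "uminus ` Xh h = Xh h"
      proof
        show "uminus ` Xh h \<subseteq> Xh h" using XhM by auto
        show "Xh h \<subseteq> uminus ` Xh h"
        proof
          fix u assume "u \<in> Xh h" then show "u \<in> uminus ` Xh h"
            using XhM[of u] by (metis image_eqI minus_minus)
        qed
      qed
      ultimately show ?thesis by (simp add: image_image)
    qed
    have bBh: "bij_betw Bh (Xh h) (Xh h)" using injBh imBh by (simp add: bij_betw_def)
    define v where "v = op_inv (Xh h) Bh (\<pi> h y)"
    have piy: "\<pi> h y \<in> Xh h" using piL by blast
    have vX: "v \<in> Xh h" unfolding v_def op_inv_def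
      using the_inv_into_into[OF injBh] piy imBh by (metis order_refl)
    have Bhv: "Bh v = \<pi> h y" unfolding v_def op_inv_def
      using f_the_inv_into_f_bij_betw[OF bBh] piy by blast
    have pix: "\<pi> h x \<in> Xh h" using piL by blast
    define w where "w = \<pi> h x - v"
    have wX: "w \<in> Xh h" unfolding w_def using XhD[OF pix vX] .
    have w_eq: "w = \<pi> h (x - v)" unfolding w_def piD using pi_proj[OF h0 h1 vX] by simp
    have ap: "norm (x - v) \<le> C * h powr r * norm y"
      using approx[OF h0 h1, of y] Binv[OF xD] unfolding y_def v_def Bh_def by simp
    have hr1: "h powr r \<le> 1" using h0 h1 r by (simp add: powr_le1)
    have hr0: "h powr r > 0" using h0 by simp
    have ap2: "norm (x - v) \<le> \<bar>C\<bar> * h powr r * norm y"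
      using ap by (smt (verit) abs_ge_self hr0 mult_right_mono norm_ge_zero zero_le_mult_iff)
    have Kabs: "norm (\<pi> h u) \<le> \<bar>K\<bar> * norm u" for u
      using K[OF h0 h1, of u] by (smt (verit) abs_ge_self mult_right_mono norm_ge_zero)
    have wn: "norm w \<le> \<bar>K\<bar> * (\<bar>C\<bar> * h powr r * norm y)"
      using Kabs[of "x - v"] ap2 w_eq by (smt (verit) abs_ge_zero mult_left_mono)
    have Bsplit: "Bh (\<pi> h x) = Bh w + \<pi> h y"
    proof -
      have "\<pi> h x = w + v" unfolding w_def by simp
      then have "Bh (\<pi> h x) = Bh w + Bh v"
        unfolding Bh_def using AhA[OF wX vX] by (simp add: algebra_simps)
      then show ?thesis using Bhv by simp
    qed
    have "norm (Bh w) \<le> lam * norm w + norm (Ah h w)"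
      unfolding Bh_def using lam by (metis norm_scaleR abs_of_nonneg norm_triangle_ineq)
    also have "\<dots> \<le> lam * norm w + C * h powr (- r) * norm w"
      using inverse_est[OF h0 h1 wX] by simp
    also have "\<dots> \<le> lam * (\<bar>K\<bar> * \<bar>C\<bar> * norm y) + \<bar>K\<bar> * C^2 * norm y"
    proof -
      have a: "lam * norm w \<le> lam * (\<bar>K\<bar> * \<bar>C\<bar> * norm y)"
      proof -
        have "\<bar>K\<bar> * (\<bar>C\<bar> * h powr r * norm y) \<le> \<bar>K\<bar> * (\<bar>C\<bar> * 1 * norm y)"
          by (intro mult_left_mono mult_right_mono hr1) auto
        with wn have "norm w \<le> \<bar>K\<bar> * \<bar>C\<bar> * norm y" by simp
        then show ?thesis using lam by (simp add: mult_left_mono)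
      qed
      have "C * h powr (- r) * norm w \<le> \<bar>C\<bar> * h powr (- r) * norm w"
        by (intro mult_right_mono) auto
      also have "\<dots> \<le> \<bar>C\<bar> * h powr (- r) * (\<bar>K\<bar> * (\<bar>C\<bar> * h powr r * norm y))"
        using wn by (intro mult_left_mono) auto
      also have "\<dots> = \<bar>K\<bar> * C^2 * norm y * (h powr (- r) * h powr r)"
        by (simp add: power2_eq_square algebra_simps)
      also have "h powr (- r) * h powr r = 1" using h0 by (simp add: powr_add[symmetric])
      finally have b: "C * h powr (- r) * norm w \<le> \<bar>K\<bar> * C^2 * norm y" by simp
      show ?thesis using a b by simp
    qed
    finally have bw: "norm (Bh w) \<le> lam * (\<bar>K\<bar> * \<bar>C\<bar> * norm y) + \<bar>K\<bar> * C^2 * norm y" .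
    have "norm (Bh (\<pi> h x)) \<le> norm (Bh w) + norm (\<pi> h y)"
      using Bsplit norm_triangle_ineq by metis
    also have "\<dots> \<le> lam * (\<bar>K\<bar> * \<bar>C\<bar> * norm y) + \<bar>K\<bar> * C^2 * norm y + \<bar>K\<bar> * norm y"
      using bw Kabs[of y] by simp
    also have "\<dots> \<le> C' * norm y" unfolding C'_def by (simp add: algebra_simps)
    finally show "norm (lam *\<^sub>R \<pi> h x + Ah h (\<pi> h x)) \<le> C' * norm (lam *\<^sub>R x + A x)"
      unfolding Bh_def y_def .
  qed
qed

end
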